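(* For every real $p\ge 0$ and every real $x>0$, $$\big[\tilde\psi^{(p)}(x)\big]^2=2^{2p}\int_0^\infty dy\,y^{2p+1}e^{-2xy}\int_0^1du\,u^p(1-u)^p\Big\{-1+2\Big(\coth y-\frac1y\Big)\Big(\coth yu-\frac{1}{yu}\Big)-\frac{2}{y(1-u)}\Big[u\Big(\coth yu-\frac1{yu}\Big)-\Big(\coth y-\frac1y\Big)\Big]\Big\}.$$
   Context: For real $p\ge0$ and $x>0$, $\tilde\psi^{(p)}(x):=-(-2)^p\int_0^\infty ds\,e^{-2xs}\,s^p\big(\coth s-\frac1s\big)$ (for integer $p$ this is the $p$-th derivative of $\tilde\psi(x)=\psi(x)-\ln x+\frac1{2x}$, $\psi$ the digamma function). Here $(-2)^p$ is only relevant through its square $2^{2p}$; for non-integer $p$ one may read $(-2)^p$ as any fixed choice with $((-2)^p)^2=2^{2p}$. *)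

theory Defs
  imports "HOL-Analysis.Analysis"
begin

definition coth :: "real \<Rightarrow> real" where
  "coth s = cosh s / sinh s"

text \<open>Sign convention for the factor (-2)^p: for integer p it is (-2)^p, otherwise 2 powr p.
  Only its square 2^(2p) matters.\<close>
definition neg2pow :: "real \<Rightarrow> real" where
  "neg2pow p = (if p \<in> \<nat> then (-2) ^ nat \<lfloor>p\<rfloor> else 2 powr p)"

definition psi_tilde :: "real \<Rightarrow> real \<Rightarrow> real" where
  "psi_tilde p x = - neg2pow p *
     (set_lebesgue_integral lborel {0<..} (\<lambda>s. exp (-2*x* s) * s powr p * (coth s - 1/s)))"

end

theory Submission
  imports Defs
begin


lemma sinh_le_xcosh: assumes "(0::real) \<le> s" shows "sinh s \<le> s * cosh s"
proof -
  have "(\<lambda>t. t * cosh t - sinh t) 0 \<le> (\<lambda>t. t * cosh t - sinh t) s"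
    by (rule DERIV_nonneg_imp_nondecreasing[OF assms])
       (auto intro!: exI derivative_eq_intros simp: algebra_simps)
  then show ?thesis by simp
qed

lemma ff_nonneg: assumes "(0::real) < s" shows "0 \<le> coth s - 1/s"
proof -
  have "sinh s > 0" using assms by simp
  then show ?thesis using sinh_le_xcosh[of s] assms
    by (simp add: coth_def field_simps)
qed

lemma ff_le1: assumes "(0::real) < s" shows "coth s - 1/s \<le> 1"
proof -
  have "sinh s > 0" using assms by simp
  have e2: "2 * s \<le> exp (2 * s) - 1" using exp_ge_add_one_self[of "2 * s"] by linarith
  have "exp (-s) * s \<le> sinh s"
  proof -
    have "exp (-s) * (2 * s) \<le> exp (-s) * (exp (2 * s) - 1)" 
      using e2 by (intro mult_left_mono) auto
    also have "\<dots> = exp s - exp (-s)" by (simp add: algebra_simps flip: exp_add)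
    finally show ?thesis by (simp add: sinh_field_def)
  qed
  then have "(cosh s - sinh s) * s \<le> sinh s" by (simp add: cosh_minus_sinh)
  then show ?thesis using \<open>sinh s > 0\<close> assms
    by (simp add: coth_def field_simps)
qed

lemma coth_deriv: assumes "(0::real) < s"
  shows "(coth has_real_derivative (- 1 / (sinh s)^2)) (at s)"
proof -
  have "sinh s \<noteq> 0" using assms by simp
  have "((\<lambda>t. cosh t / sinh t) has_real_derivative
     ((sinh s * sinh s - cosh s * cosh s) / (sinh s * sinh s))) (at s)"
    using DERIV_divide[OF has_field_derivative_cosh[OF DERIV_ident] has_field_derivative_sinh[OF DERIV_ident] \<open>sinh s \<noteq> 0\<close>]
    by simp
  moreover have "(sinh s * sinh s - cosh s * cosh s) = -1"
    using hyperbolic_pythagoras[of s] by (simp add: power2_eq_square)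
  ultimately show ?thesis unfolding coth_def[abs_def] by (simp add: power2_eq_square)
qed

lemma phi_deriv: assumes "(0::real) < s"
  shows "((\<lambda>t. t * coth t) has_real_derivative (coth s - s / (sinh s)^2)) (at s)"
  using DERIV_mult[OF DERIV_ident coth_deriv[OF assms]] by simp

lemma phi_deriv_bounds: assumes "(0::real) < z"
  shows "0 \<le> coth z - z / (sinh z)^2 \<and> coth z - z / (sinh z)^2 \<le> 1"
proof -
  have sp: "sinh z > 0" using assms by simp
  have eq: "coth z - z / (sinh z)^2 = (sinh z * cosh z - z) / (sinh z)^2"
    using sp by (simp add: coth_def field_simps power2_eq_square)
  have l: "z \<le> sinh z * cosh z"
  proof -
    have "2 * z \<le> sinh (2 * z)" using real_le_x_sinh[of "2 * z"] assms
      by (simp add: sinh_field_def exp_minus field_simps)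
    then show ?thesis by (simp add: sinh_double)
  qed
  have u: "sinh z * cosh z - z \<le> (sinh z)^2"
  proof -
    have e2: "1 - 2 * z \<le> exp (- (2 * z))" using exp_ge_add_one_self[of "- (2 * z)"] by linarith
    have "sinh z * cosh z - (sinh z)^2 = sinh z * (cosh z - sinh z)" by (simp add: power2_eq_square algebra_simps)
    also have "\<dots> = (exp z - exp (-z)) / 2 * exp (-z)" unfolding cosh_minus_sinh by (simp add: sinh_field_def)
    also have "\<dots> = (1 - exp (- (2 * z))) / 2"
      by (simp add: field_simps flip: exp_add)
    also have "\<dots> \<le> z" using e2 by simp
    finally show ?thesis by simp
  qed
  show ?thesis unfolding eq using l u sp by (auto simp: field_simps)
qed

lemma phi_lip: assumes "(0::real) < a" "a \<le> b"
  shows "\<bar>b * coth b - a * coth a\<bar> \<le> b - a"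
proof (cases "a = b")
  case True then show ?thesis by simp
next
  case False
  then have ab: "a < b" using assms by simp
  have "\<exists>z>a. z < b \<and> b * coth b - a * coth a = (b - a) * (coth z - z / (sinh z)^2)"
    by (rule MVT2[OF ab]) (use assms in \<open>auto intro!: phi_deriv\<close>)
  then obtain z where z: "a < z" "z < b" "b * coth b - a * coth a = (b - a) * (coth z - z / (sinh z)^2)"
    by blast
  have "z > 0" using z assms by simp
  from phi_deriv_bounds[OF this] have "0 \<le> coth z - z / (sinh z)^2" "coth z - z / (sinh z)^2 \<le> 1" by auto
  then show ?thesis unfolding z(3) using ab
    by (simp add: abs_mult mult_le_cancel_left1)
qed

lemma coth_add: assumes "(0::real) < a" "0 < b"
  shows "coth a * coth b = coth (a + b) * (coth a + coth b) - 1"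
proof -
  have sa: "sinh a > 0" and sb: "sinh b > 0" and sab: "sinh (a+b) > 0" using assms by auto
  define D where "D = sinh a * cosh b + cosh a * sinh b"
  have D: "D > 0" using sab by (simp add: D_def sinh_add)
  have c1: "coth (a+b) = (cosh a * cosh b + sinh a * sinh b) / D"
    by (simp add: coth_def D_def sinh_add cosh_add)
  have c2: "coth a + coth b = D / (sinh a * sinh b)"
    using sa sb by (simp add: coth_def D_def field_simps)
  have "coth (a + b) * (coth a + coth b) = (cosh a * cosh b + sinh a * sinh b) / (sinh a * sinh b)"
    unfolding c1 c2 using D by simp
  also have "\<dots> = coth a * coth b + 1" using sa sb by (simp add: coth_def field_simps)
  finally show ?thesis by simp
qed

definition Rf :: "real \<Rightarrow> real \<Rightarrow> real" where
  "Rf y u = -1 + 2 * (coth y - 1/y) * (coth (y*u) - 1/(y*u))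
         - 2 / (y*(1-u)) * (u * (coth (y*u) - 1/(y*u)) - (coth y - 1/y))"

lemma alg_id:
  fixes a b ca cb cy y :: real assumes a: "0 < a" and b: "0 < b" and y: "y = a + b"
  shows "(-1 + 2*(cy - 1/y)*(ca - 1/a) - 2/b * (a/y * (ca - 1/a) - (cy - 1/y)))
     + (-1 + 2*(cy - 1/y)*(cb - 1/b) - 2/a*(b/y*(cb-1/b) - (cy - 1/y)))
     = -2 + 2*cy*(ca+cb) - 2*ca/b - 2*cb/a + 2/(a*b)"
proof -
  have yp: "y > 0" using a b y by simp
  have "y*a*b*((-1 + 2*(cy - 1/y)*(ca - 1/a) - 2/b * (a/y * (ca - 1/a) - (cy - 1/y)))
     + (-1 + 2*(cy - 1/y)*(cb - 1/b) - 2/a*(b/y*(cb-1/b) - (cy - 1/y))))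
     = y*a*b*(-2 + 2*cy*(ca+cb) - 2*ca/b - 2*cb/a + 2/(a*b))"
    using a b yp apply (simp add: field_simps) unfolding y by (simp add: algebra_simps)
  then show ?thesis using a b yp by simp
qed

lemma Rf_sym: assumes "(0::real) < y" "0 < u" "u < 1"
  shows "Rf y u + Rf y (1-u) = 2 * ((coth (y*u) - 1/(y*u)) * (coth (y*(1-u)) - 1/(y*(1-u))))"
proof -
  define a where "a = y*u"
  define b where "b = y*(1-u)"
  have a: "a > 0" and b: "b > 0" using assms by (auto simp: a_def b_def)
  have y: "y = a + b" by (simp add: a_def b_def algebra_simps)
  have u: "u = a/y" using assms by (simp add: a_def b_def field_simps)
  have u': "1 - u = b/y" using assms by (simp add: a_def b_def field_simps)
  have yu': "y * (1 - (1 - u)) = a" by (simp add: a_def)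
  have "Rf y u + Rf y (1-u) = -2 + 2*coth y*(coth a+coth b) - 2*coth a/b - 2*coth b/a + 2/(a*b)"
    unfolding Rf_def yu' a_def[symmetric] b_def[symmetric] 
    apply (subst (1) u) apply (subst u')
    using alg_id[OF a b y, of "coth y" "coth a" "coth b"] y by simp
  also have "\<dots> = 2 * ((coth a - 1/a) * (coth b - 1/b))"
  proof -
    have e: "2*coth y*(coth a+coth b) = 2*(coth a*coth b) + 2"
      using coth_add[OF a b] y by (simp add: algebra_simps)
    show ?thesis unfolding e using a b by (simp add: field_simps)
  qed
  finally show ?thesis by (simp add: a_def b_def)
qed

lemma abs2: fixes F G :: real assumes "0 \<le> F" "F \<le> 1" "0 \<le> G" "G \<le> 1"
  shows "\<bar>2 * F * G\<bar> \<le> 2"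
proof -
  have "F * G \<le> 1" using assms by (intro mult_le_one) auto
  moreover have "0 \<le> F * G" using assms by simp
  ultimately show ?thesis by (simp add: abs_mult mult.assoc)
qed

lemma Rf_bound: assumes y: "(0::real) < y" and u: "0 < u" "u < 1"
  shows "\<bar>Rf y u\<bar> \<le> 3 + 2/y"
proof -
  define a where "a = y*u"
  have a: "0 < a" "a \<le> y" using y u by (auto simp: a_def mult_left_le)
  have fy: "0 \<le> coth y - 1/y" "coth y - 1/y \<le> 1" using ff_nonneg[OF y] ff_le1[OF y] by auto
  have fa: "0 \<le> coth a - 1/a" "coth a - 1/a \<le> 1" using ff_nonneg[OF a(1)] ff_le1[OF a(1)] by auto
  have T: "u * (coth a - 1/a) - (coth y - 1/y) = (a * coth a - y * coth y) / y"
    using y u by (simp add: a_def field_simps)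
  have L: "\<bar>a * coth a - y * coth y\<bar> \<le> y * (1 - u)"
    using phi_lip[OF a] by (simp add: a_def abs_minus_commute algebra_simps)
  have "\<bar>2 / (y*(1-u)) * (u * (coth a - 1/a) - (coth y - 1/y))\<bar>
       = 2 / (y*(1-u)) * \<bar>a * coth a - y * coth y\<bar> / y"
    unfolding T using y u by (simp only: abs_mult abs_divide) simp
  also have "\<dots> \<le> 2 / (y*(1-u)) * (y * (1 - u)) / y"
    using L y u by (intro divide_right_mono mult_left_mono) auto
  also have "\<dots> = 2 / y" using y u by (simp add: field_simps)
  finally have t3: "\<bar>2 / (y*(1-u)) * (u * (coth a - 1/a) - (coth y - 1/y))\<bar> \<le> 2 / y" .
  have t2: "\<bar>2 * (coth y - 1/y) * (coth a - 1/a)\<bar> \<le> 2"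
    using abs2[OF fy fa] .
  show ?thesis unfolding Rf_def a_def[symmetric] using t2 t3 by linarith
qed

lemma coth_measurable[measurable]: "coth \<in> borel_measurable borel"
proof -
  have "(\<lambda>s. cosh s / sinh s :: real) \<in> borel_measurable borel"
    by (intro borel_measurable_divide borel_measurable_continuous_onI continuous_intros)
  then show ?thesis unfolding coth_def[abs_def] .
qed

lemma Rf_measurable[measurable]: "case_prod Rf \<in> borel_measurable (borel \<Otimes>\<^sub>M borel)"
  unfolding Rf_def[abs_def] by measurable




lemma step_pointwise:
  fixes p x y u :: real
  assumes y: "0 < y" and u: "0 < u" "u < 1"
  shows "y * ((exp (-2*x*(y*u)) * (y*u) powr p * (coth (y*u) - 1/(y*u))) *
              (exp (-2*x*(y - y*u)) * (y - y*u) powr p * (coth (y - y*u) - 1/(y - y*u))))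
       = y powr (2*p+1) * exp (-2 * x * y) *
         (u powr p * (1-u) powr p * ((coth (y*u) - 1/(y*u)) * (coth (y*(1-u)) - 1/(y*(1-u)))))"
proof -
  have e1: "y - y*u = y*(1-u)" by (simp add: algebra_simps)
  have p1: "(y*u) powr p = y powr p * u powr p" using y u by (simp add: powr_mult)
  have p2: "(y*(1-u)) powr p = y powr p * (1-u) powr p" using y u by (simp add: powr_mult)
  have p3: "y powr (2*p+1) = y * (y powr p * y powr p)"
  proof -
    have "y powr (2*p+1) = y powr (2*p) * y powr 1" by (rule powr_add)
    moreover have "y powr (2*p) = y powr p * y powr p" by (metis mult_2 powr_add)
    ultimately show ?thesis using y by simp
  qed
  have ex: "exp (-2*x*(y*u)) * exp (-2*x*(y*(1-u))) = exp (-2 * x * y)"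
    by (simp add: exp_add[symmetric] algebra_simps)
  show ?thesis unfolding e1 p1 p2 p3 ex[symmetric] by (simp only: mult_ac)
qed

lemma Rf_meas_u[measurable]: "(\<lambda>u. Rf y u) \<in> borel_measurable borel"
  unfolding Rf_def by measurable

lemma J_lemma:
  fixes p y :: real assumes p: "0 \<le> p" and y: "0 < y"
  defines "K \<equiv> (\<lambda>u. indicator {0<..<1} u * (u powr p * (1-u) powr p *
      ((coth (y*u) - 1/(y*u)) * (coth (y*(1-u)) - 1/(y*(1-u))))))"
  shows "integrable lborel K"
    and "set_lebesgue_integral lborel {0<..<1} (\<lambda>u. u powr p * (1-u) powr p * Rf y u) = integral\<^sup>L lborel K"
proof -
  define A where "A u = indicator {0<..<1} u *\<^sub>R (u powr p * (1-u) powr p * Rf y u)" for u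
  have intA: "integrable lborel A" unfolding A_def
  proof (rule integrableI_bounded_set_indicator[where B="3 + 2/y"])
    show "{0<..<1::real} \<in> sets lborel" by simp
    show "(\<lambda>u. u powr p * (1 - u) powr p * Rf y u) \<in> borel_measurable lborel" by measurable
    show "emeasure lborel {0<..<1::real} < \<infinity>" by simp
    show "AE u in lborel. u \<in> {0<..<1} \<longrightarrow> norm (u powr p * (1 - u) powr p * Rf y u) \<le> 3 + 2 / y"
    proof (rule AE_I2, rule impI)
      fix u :: real assume u: "u \<in> {0<..<1}"
      have w: "u powr p \<le> 1" "(1-u) powr p \<le> 1" using u p by (auto intro!: powr_le1)
      have w0: "0 \<le> u powr p" "0 \<le> (1-u) powr p" by auto
      have "norm (u powr p * (1 - u) powr p * Rf y u) = u powr p * (1 - u) powr p * \<bar>Rf y u\<bar>"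
        using w0 by (simp add: abs_mult)
      also have "\<dots> \<le> 1 * 1 * (3 + 2/y)"
        using w w0 Rf_bound[OF y, of u] u by (intro mult_mono) auto
      finally show "norm (u powr p * (1 - u) powr p * Rf y u) \<le> 3 + 2 / y" by simp
    qed
  qed
  have intA': "integrable lborel (\<lambda>u. A (1 + (-1)*u))"
    by (rule lborel_integrable_real_affine[OF intA]) simp
  have eqA: "integral\<^sup>L lborel A = integral\<^sup>L lborel (\<lambda>u. A (1 + (-1)*u))"
    using lborel_integral_real_affine[of "-1" A 1] by simp
  have Kpt: "K u = (A u + A (1 + (-1)*u)) / 2" for u
  proof (cases "u \<in> {0<..<1}")
    case True
    then have u: "0 < u" "u < 1" by auto
    have "1 + (-1)*u \<in> {0<..<1}" using u by auto
    then have "A (1 + (-1)*u) = (1-u) powr p * u powr p * Rf y (1-u)"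
      by (simp add: A_def)
    moreover have "A u = u powr p * (1-u) powr p * Rf y u" using True by (simp add: A_def)
    ultimately have "(A u + A (1 + (-1)*u)) / 2 = u powr p * (1-u) powr p * ((Rf y u + Rf y (1-u)) / 2)"
      by (simp add: algebra_simps)
    also have "\<dots> = K u" unfolding Rf_sym[OF y u] K_def using True by simp
    finally show ?thesis by simp
  next
    case False
    then have "1 + (-1)*u \<notin> {0<..<1}" by auto
    then show ?thesis using False by (simp add: A_def K_def)
  qed
  have KA: "K = (\<lambda>u. (A u + A (1 + (-1)*u)) / 2)" using Kpt by (simp add: fun_eq_iff)
  show "integrable lborel K" unfolding KA using intA intA' by auto
  have "integral\<^sup>L lborel K = (integral\<^sup>L lborel A + integral\<^sup>L lborel (\<lambda>u. A (1 + (-1)*u))) / 2"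
    unfolding KA using intA intA' by (simp add: Bochner_Integration.integral_add)
  also have "\<dots> = integral\<^sup>L lborel A" using eqA by simp
  finally show "set_lebesgue_integral lborel {0<..<1} (\<lambda>u. u powr p * (1-u) powr p * Rf y u) = integral\<^sup>L lborel K"
    by (simp add: set_lebesgue_integral_def A_def[abs_def])
qed

lemma neg2pow_sq: "(neg2pow p)^2 = 2 powr (2*p)"
proof (cases "p \<in> \<nat>")
  case True
  then obtain n where p: "p = real n" by (auto elim: Nats_cases)
  have "2 powr (2*p) = 2 powr (real (2*n))" by (simp add: p)
  also have "\<dots> = 2 ^ (2*n)" by (rule powr_realpow) simp
  finally have a: "2 powr (2*p) = 2 ^ (2*n)" .
  have "(neg2pow p)^2 = ((-2::real)^n)^2" using True by (simp add: neg2pow_def p)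
  also have "\<dots> = ((-2::real)^2)^n" by (simp only: power_mult[symmetric] mult.commute)
  also have "\<dots> = ((2::real)^2)^n" by simp
  also have "\<dots> = 2^(2*n)" by (simp only: power_mult)
  finally show ?thesis using a by simp
next
  case False
  then have "(neg2pow p)^2 = 2 powr p * 2 powr p" by (simp add: neg2pow_def power2_eq_square)
  also have "\<dots> = 2 powr (p + p)" by (rule powr_add[symmetric])
  also have "\<dots> = 2 powr (2*p)" by (simp only: mult_2)
  finally show ?thesis .
qed

theorem lemma4p1p2:
  fixes p x :: real
  assumes "p \<ge> 0" and "x > 0"
  shows "(psi_tilde p x)^2 =
    2 powr (2*p) *
    set_lebesgue_integral lborel {0<..} (\<lambda>y. y powr (2*p+1) * exp (-2 * x * y) *
      set_lebesgue_integral lborel {0<..<1} (\<lambda>u. u powr p * (1-u) powr p *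
        (-1 + 2 * (coth y - 1/y) * (coth (y*u) - 1/(y*u))
         - 2 / (y*(1-u)) * (u * (coth (y*u) - 1/(y*u)) - (coth y - 1/y)))))"
proof -
  note p = assms(1)
  define g where "g s = indicator {0<..} s * (exp (-2*x* s) * s powr p * (coth s - 1/s))" for s :: real
  have g_nn: "0 \<le> g s" for s
    using ff_nonneg[of s] by (auto simp: g_def indicator_def)
  have g_meas[measurable]: "g \<in> borel_measurable borel" unfolding g_def[abs_def] by measurable
  have g_meas': "g \<in> borel_measurable lborel" using g_meas by simp
  define N where "N = (\<integral>\<^sup>+ s. ennreal (g s) \<partial>lborel)"
  have I_eq: "set_lebesgue_integral lborel {0<..} (\<lambda>s. exp (-2*x* s) * s powr p * (coth s - 1/s)) = enn2real N"
  proof -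
    have "(\<lambda>s. indicator {0<..} s *\<^sub>R (exp (-2*x* s) * s powr p * (coth s - 1/s))) = g"
      by (simp add: g_def fun_eq_iff)
    then show ?thesis unfolding set_lebesgue_integral_def N_def
      using integral_eq_nn_integral[OF g_meas' AE_I2[OF g_nn]] by simp
  qed
  have LHS: "(psi_tilde p x)^2 = 2 powr (2*p) * enn2real (N * N)"
  proof -
    have "(psi_tilde p x)^2 = (neg2pow p)^2 * (enn2real N * enn2real N)"
      unfolding psi_tilde_def I_eq by (simp add: power2_eq_square)
    then show ?thesis by (simp add: neg2pow_sq enn2real_mult)
  qed
  define K where "K y u = indicator {0<..<1} u * (u powr p * (1-u) powr p *
      ((coth (y*u) - 1/(y*u)) * (coth (y*(1-u)) - 1/(y*(1-u)))))" for y u :: real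
  define J where "J y = set_lebesgue_integral lborel {0<..<1} (\<lambda>u. u powr p * (1-u) powr p * Rf y u)" for y
  define Y where "Y y = y powr (2*p+1) * exp (-2 * x * y)" for y :: real
  have K_nn: "0 \<le> K y u" if "0 < y" for y u
  proof (cases "u \<in> {0<..<1}")
    case True
    then have "0 < y*u" "0 < y*(1-u)" using that by auto
    then show ?thesis using ff_nonneg[of "y*u"] ff_nonneg[of "y*(1-u)"] True by (simp add: K_def)
  qed (simp add: K_def)
  have K_meas[measurable]: "(\<lambda>u. K y u) \<in> borel_measurable borel" for y
    unfolding K_def by measurable
  have JK: "ennreal (J y) = (\<integral>\<^sup>+ u. ennreal (K y u) \<partial>lborel)" and J_nn: "0 \<le> J y" if "0 < y" for y
  proof -
    have i: "integrable lborel (K y)" and e: "J y = integral\<^sup>L lborel (K y)"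
      using J_lemma[OF p that] unfolding K_def[abs_def] J_def by auto
    show "ennreal (J y) = (\<integral>\<^sup>+ u. ennreal (K y u) \<partial>lborel)"
      unfolding e using nn_integral_eq_integral[OF i AE_I2[OF K_nn[OF that]]] by simp
    show "0 \<le> J y" unfolding e using K_nn[OF that] by (simp add: integral_nonneg)
  qed
  have J_meas[measurable]: "J \<in> borel_measurable borel"
    unfolding J_def[abs_def] set_lebesgue_integral_def by measurable
  define H where "H y = indicator {0<..} y * (Y y * J y)" for y
  have H_nn: "0 \<le> H y" for y
    using J_nn[of y] by (auto simp: H_def Y_def indicator_def)
  have H_meas[measurable]: "H \<in> borel_measurable borel"
    unfolding H_def Y_def by measurable
  have H_meas': "H \<in> borel_measurable lborel" using H_meas by simp
  have RHS: "set_lebesgue_integral lborel {0<..} (\<lambda>y. Y y * J y) = enn2real (\<integral>\<^sup>+ y. ennreal (H y) \<partial>lborel)"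
  proof -
    have "(\<lambda>y. indicator {0<..} y *\<^sub>R (Y y * J y)) = H" by (simp add: H_def fun_eq_iff)
    then show ?thesis unfolding set_lebesgue_integral_def
      using integral_eq_nn_integral[OF H_meas' AE_I2[OF H_nn]] by simp
  qed
  have pw: "(\<integral>\<^sup>+ s. ennreal (g s) * ennreal (g (y - s)) \<partial>lborel) = ennreal (H y)" for y
  proof (cases "0 < y")
    case False
    have z: "ennreal (g s) * ennreal (g (y - s)) = 0" for s
      using False by (cases "0 < s") (auto simp: g_def)
    have i0: "(\<integral>\<^sup>+ s. ennreal (g s) * ennreal (g (y - s)) \<partial>lborel) = 0"
      unfolding z by simp
    have h0: "H y = 0" using False by (simp add: H_def)
    show ?thesis unfolding i0 h0 by simp
  next
    case True
    have "(\<integral>\<^sup>+ s. ennreal (g s) * ennreal (g (y - s)) \<partial>lborel)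
        = ennreal y * (\<integral>\<^sup>+ u. ennreal (g (y*u)) * ennreal (g (y - y*u)) \<partial>lborel)"
    proof -
      have m: "(\<lambda>s. ennreal (g s) * ennreal (g (y - s))) \<in> borel_measurable borel" by measurable
      show ?thesis using nn_integral_real_affine[OF m, of y 0] True by simp
    qed
    also have "\<dots> = (\<integral>\<^sup>+ u. ennreal y * (ennreal (g (y*u)) * ennreal (g (y - y*u))) \<partial>lborel)"
    proof (rule nn_integral_cmult[symmetric])
      show "(\<lambda>u. ennreal (g (y*u)) * ennreal (g (y - y*u))) \<in> borel_measurable lborel" by measurable
    qed
    also have "\<dots> = (\<integral>\<^sup>+ u. ennreal (Y y) * ennreal (K y u) \<partial>lborel)"
    proof (rule nn_integral_cong)
      fix u :: real
      have yk: "y * (g (y*u) * g (y - y*u)) = Y y * K y u"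
      proof (cases "u \<in> {0<..<1}")
        case True
        then have u1: "0 < u" and u2: "u < 1" by auto
        have a1: "0 < y*u" using \<open>0 < y\<close> u1 by simp
        have a2: "0 < y - y*u" using \<open>0 < y\<close> u2 by simp
        have gyu: "g (y*u) = exp (-2*x* (y*u)) * (y*u) powr p * (coth (y*u) - 1/(y*u))"
          using a1 by (simp add: g_def)
        have gyu': "g (y - y*u) = exp (-2*x* (y - y*u)) * (y - y*u) powr p * (coth (y - y*u) - 1/(y - y*u))"
          using a2 by (simp add: g_def)
        have Kyu: "K y u = u powr p * (1-u) powr p * ((coth (y*u) - 1/(y*u)) * (coth (y*(1-u)) - 1/(y*(1-u))))"
          using True by (simp add: K_def)
        show ?thesis unfolding gyu gyu' Kyu Y_def by (rule step_pointwise[OF \<open>0 < y\<close> u1 u2])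
      next
        case False
        then have "u \<le> 0 \<or> 1 \<le> u" by auto
        then have "y*u \<le> 0 \<or> y - y*u \<le> 0"
        proof
          assume "u \<le> 0" then show ?thesis using \<open>0 < y\<close> by (simp add: mult_nonneg_nonpos)
        next
          assume "1 \<le> u" then have "y * 1 \<le> y * u" using \<open>0 < y\<close> by (intro mult_left_mono) auto
          then show ?thesis by simp
        qed
        then have "g (y*u) = 0 \<or> g (y - y*u) = 0" by (auto simp: g_def)
        moreover have "K y u = 0" using False by (simp add: K_def)
        ultimately show ?thesis by auto
      qed
      have Y0: "0 \<le> Y y" by (simp add: Y_def)
      have e1: "ennreal (y * (g (y*u) * g (y - y*u))) = ennreal y * ennreal (g (y*u) * g (y - y*u))"
        by (rule ennreal_mult) (use True g_nn in auto)
      have e2: "ennreal (g (y*u) * g (y - y*u)) = ennreal (g (y*u)) * ennreal (g (y - y*u))"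
        by (rule ennreal_mult[OF g_nn g_nn])
      have e3: "ennreal (Y y * K y u) = ennreal (Y y) * ennreal (K y u)"
        by (rule ennreal_mult[OF Y0 K_nn[OF True]])
      show "ennreal y * (ennreal (g (y*u)) * ennreal (g (y - y*u))) = ennreal (Y y) * ennreal (K y u)"
        using e1 e2 e3 yk by metis
    qed
    also have "\<dots> = ennreal (Y y) * ennreal (J y)"
    proof -
      have mk: "(\<lambda>u. ennreal (K y u)) \<in> borel_measurable lborel" by measurable
      show ?thesis using nn_integral_cmult[OF mk, of "ennreal (Y y)"] JK[OF True] by simp
    qed
    also have "\<dots> = ennreal (H y)"
    proof -
      have "H y = Y y * J y" using True by (simp add: H_def)
      moreover have "ennreal (Y y * J y) = ennreal (Y y) * ennreal (J y)"
        by (rule ennreal_mult[OF _ J_nn[OF True]]) (simp add: Y_def)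
      ultimately show ?thesis by simp
    qed
    finally show ?thesis .
  qed
  have main: "N * N = (\<integral>\<^sup>+ y. ennreal (H y) \<partial>lborel)"
  proof -
    have m: "(\<lambda>s. ennreal (g s)) \<in> borel_measurable lborel" using g_meas' by simp
    have "N * N = (\<integral>\<^sup>+ s. ennreal (g s) * N \<partial>lborel)"
      using nn_integral_multc[OF m, of N] unfolding N_def[symmetric] by (rule sym)
    also have "\<dots> = (\<integral>\<^sup>+ s. (\<integral>\<^sup>+ t. ennreal (g s) * ennreal (g t) \<partial>lborel) \<partial>lborel)"
    proof (rule nn_integral_cong)
      fix s :: real
      show "ennreal (g s) * N = (\<integral>\<^sup>+ t. ennreal (g s) * ennreal (g t) \<partial>lborel)"
        using nn_integral_cmult[OF m, of "ennreal (g s)"] unfolding N_def[symmetric] by (rule sym)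
    qed
    also have "\<dots> = (\<integral>\<^sup>+ s. (\<integral>\<^sup>+ y. ennreal (g s) * ennreal (g (y - s)) \<partial>lborel) \<partial>lborel)"
    proof (rule nn_integral_cong)
      fix s :: real
      have m2: "(\<lambda>t. ennreal (g s) * ennreal (g t)) \<in> borel_measurable borel" by measurable
      show "(\<integral>\<^sup>+ t. ennreal (g s) * ennreal (g t) \<partial>lborel) = (\<integral>\<^sup>+ y. ennreal (g s) * ennreal (g (y - s)) \<partial>lborel)"
        using nn_integral_real_affine[OF m2, of 1 "-s"] by simp
    qed
    also have "\<dots> = (\<integral>\<^sup>+ y. (\<integral>\<^sup>+ s. ennreal (g s) * ennreal (g (y - s)) \<partial>lborel) \<partial>lborel)"
    proof (rule lborel_pair.Fubini'[symmetric])
      show "(\<lambda>(s, y). ennreal (g s) * ennreal (g (y - s))) \<in> borel_measurable (lborel \<Otimes>\<^sub>M lborel)"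
        by measurable
    qed
    also have "\<dots> = (\<integral>\<^sup>+ y. ennreal (H y) \<partial>lborel)"
      using pw by simp
    finally show ?thesis .
  qed
  have "(psi_tilde p x)^2 = 2 powr (2*p) * set_lebesgue_integral lborel {0<..} (\<lambda>y. Y y * J y)"
    unfolding LHS RHS main ..
  then show ?thesis unfolding Y_def J_def Rf_def .
qed


end
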